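(* Let $(\mu,\nu)\in\mathcal{P}(\mathbb{T})\times\mathcal{P}(\mathbb{T})$ be $\rhd_c$-infinitely divisible. Then both $\mu$ and $\nu$ belong to $ID(\uplus\!\!\times,\mathbb{T})$. In particular, $ID(\rhd,\mathbb{T})\subset ID(\uplus\!\!\times,\mathbb{T})$.
   Context: $\mathbb{T}$ is the unit circle, $\mathbb{D}$ the open unit disc, and $\mathcal{P}(\mathbb{T})$ the Borel probability measures on $\mathbb{T}$. For $\mu\in\mathcal{P}(\mathbb{T})$ let $\psi_\mu(z)=\int\frac{z\zeta}{1-z\zeta}d\mu(\zeta)$ and $\eta_\mu=\psi_\mu/(1+\psi_\mu)$ on $\mathbb{D}$; $\eta_\mu$ determines $\mu$, and the analytic functions of this form are exactly those $\eta:\mathbb{D}\to\mathbb{C}$ with $|\eta(z)|\le|z|$. Convolutions on $\mathcal{P}(\mathbb{T})$: - Multiplicative monotone: $\eta_{\mu\rhd\nu}=\eta_\mu\circ\eta_\nu$. - Multiplicative Boolean: $\eta_{\mu\uplus\!\!\times\nu}(z)=\eta_\mu(z)\eta_\nu(z)/z$. - Multiplicative conditionally monotone, on pairs: $(\mu_1,\nu_1)\rhd_c(\mu_2,\nu_2)=(\mu,\nu)$ with $\eta_\nu=\eta_{\nu_1}\circ\eta_{\nu_2}$ and $\eta_\mu(z)=\eta_{\mu_2}(z)\,h_{\mu_1}(\eta_{\nu_2}(z))$, where $h_{\mu_1}(w)=\eta_{\mu_1}(w)/w$ and $h_{\mu_1}(0)=\eta_{\mu_1}'(0)$. For each of these operations,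 an element is infinitely divisible if for every $n\ge2$ it equals the $n$-fold convolution power of some element of $\mathcal{P}(\mathbb{T})$ (respectively of $\mathcal{P}(\mathbb{T})^2$ for $\rhd_c$). $ID(\rhd,\mathbb{T})$ and $ID(\uplus\!\!\times,\mathbb{T})$ denote the sets of $\rhd$- and $\uplus\!\!\times$-infinitely divisible probability measures on $\mathbb{T}$. *)

theory Defs
  imports "HOL-Probability.Probability"
begin

text \<open>Borel probability measures on the unit circle T, as measures on the complex plane
  concentrated on the unit circle.\<close>
definition PT :: "complex measure set" where
  "PT = {M. prob_space M \<and> sets M = sets borel \<and> emeasure M (UNIV - sphere 0 1) = 0}"

definition psi :: "complex measure \<Rightarrow> complex \<Rightarrow> complex" where
  "psi M z = (\<integral>\<zeta>. z * \<zeta> / (1 - z * \<zeta>) \<partial>M)"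

definition eta :: "complex measure \<Rightarrow> complex \<Rightarrow> complex" where
  "eta M z = psi M z / (1 + psi M z)"

definition hfun :: "(complex \<Rightarrow> complex) \<Rightarrow> complex \<Rightarrow> complex" where
  "hfun f w = (if w = 0 then deriv f 0 else f w / w)"

text \<open>Conditionally monotone convolution on pairs (eta_mu, eta_nu) of eta-transforms:
  (mu1,nu1) |>c (mu2,nu2) = (mu,nu) with eta_nu = eta_nu1 o eta_nu2 and
  eta_mu(z) = eta_mu2(z) * h_mu1(eta_nu2(z)).\<close>
definition cm_step ::
  "(complex \<Rightarrow> complex) \<times> (complex \<Rightarrow> complex) \<Rightarrow> (complex \<Rightarrow> complex) \<times> (complex \<Rightarrow> complex)
     \<Rightarrow> (complex \<Rightarrow> complex) \<times> (complex \<Rightarrow> complex)" where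
  "cm_step p q = ((\<lambda>z. fst q z * hfun (fst p) (snd q z)), snd p \<circ> snd q)"

fun cm_pow :: "(complex \<Rightarrow> complex) \<Rightarrow> (complex \<Rightarrow> complex) \<Rightarrow> nat
     \<Rightarrow> (complex \<Rightarrow> complex) \<times> (complex \<Rightarrow> complex)" where
  "cm_pow f g 0 = ((\<lambda>z. z), (\<lambda>z. z))"
| "cm_pow f g (Suc n) = cm_step (f, g) (cm_pow f g n)"

text \<open>Infinite divisibility; equality of measures is expressed through equality of their
  eta-transforms on the unit disc (eta determines the measure).\<close>
definition ID_cm :: "complex measure \<Rightarrow> complex measure \<Rightarrow> bool" where
  "ID_cm \<mu> \<nu> \<longleftrightarrow> (\<forall>n\<ge>2. \<exists>\<mu>1 \<in> PT. \<exists>\<nu>1 \<in> PT. \<forall>z \<in> ball 0 1.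
      eta \<mu> z = fst (cm_pow (eta \<mu>1) (eta \<nu>1) n) z \<and> eta \<nu> z = snd (cm_pow (eta \<mu>1) (eta \<nu>1) n) z)"

definition ID_boolean :: "complex measure set" where
  "ID_boolean = {\<mu> \<in> PT. \<forall>n\<ge>2. \<exists>\<rho> \<in> PT. \<forall>z \<in> ball 0 1.
      eta \<mu> z = eta \<rho> z ^ n / z ^ (n - 1)}"

definition ID_monotone :: "complex measure set" where
  "ID_monotone = {\<mu> \<in> PT. \<forall>n\<ge>2. \<exists>\<rho> \<in> PT. \<forall>z \<in> ball 0 1.
      eta \<mu> z = (eta \<rho> ^^ n) z}"

end

theory Submission
  imports Defs "HOL-Complex_Analysis.Complex_Analysis"
begin

lemma cm_pow_formula:
  "cm_pow f g n = ((\<lambda>z. z * (\<Prod>k<n. hfun f ((g^^k) z))), g^^n)"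
proof (induction n)
  case 0
  then show ?case by simp
next
  case (Suc n)
  then show ?case by (simp add: cm_step_def mult.assoc comp_def)
qed

lemma schwarz_weak:
  assumes holf: "f holomorphic_on ball 0 1" and f0: "f 0 = 0"
    and le1: "\<And>z. norm z < 1 \<Longrightarrow> norm (f z) \<le> 1" and xi: "norm \<xi> < 1"
  shows "norm (f \<xi>) \<le> norm \<xi>"
proof (rule field_le_epsilon)
  fix e :: real assume e: "e > 0"
  define g where "g z = f z / of_real (1 + e)" for z
  have "g holomorphic_on ball 0 1" unfolding g_def using holf e
    by (intro holomorphic_intros) auto
  moreover have "g 0 = 0" by (simp add: g_def f0)
  moreover have "norm (g z) < 1" if "norm z < 1" for z
  proof -
    have "norm (f z) \<le> 1" using le1 that .
    have n: "norm (complex_of_real (1+e)) = 1 + e" using e by (simp only: norm_of_real)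
    show ?thesis unfolding g_def norm_divide n using e \<open>norm (f z) \<le> 1\<close> by (simp add: divide_less_eq)
  qed
  ultimately have "norm (g \<xi>) \<le> norm \<xi>" using Schwarz_Lemma(1)[of g \<xi>] xi by blast
  moreover have n: "norm (complex_of_real (1+e)) = 1 + e" using e by (simp only: norm_of_real)
  ultimately have "norm (f \<xi>) \<le> (1 + e) * norm \<xi>" using e
    unfolding g_def norm_divide n by (simp add: divide_le_eq mult.commute)
  also have "\<dots> \<le> norm \<xi> + e" using xi e by (simp add: algebra_simps)
  finally show "norm (f \<xi>) \<le> norm \<xi> + e" .
qed

lemma hfun_eq: "f 0 = 0 \<Longrightarrow> f z = z * hfun f z"
  by (cases "z = 0") (auto simp: hfun_def)

lemma hfun_holo:
  assumes holf: "f holomorphic_on ball 0 1" and f0: "f 0 = 0"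
  shows "hfun f holomorphic_on ball 0 1"
proof -
  obtain h where h: "h holomorphic_on ball 0 1" "\<And>z. norm z < 1 \<Longrightarrow> f z = z * h z" "deriv f 0 = h 0"
    using Schwarz3[OF holf f0] by blast
  have "hfun f z = h z" if "z \<in> ball 0 1" for z
    using that h by (cases "z = 0") (auto simp: hfun_def)
  then show ?thesis using h(1) holomorphic_transform by metis
qed

lemma hfun_le1:
  assumes holf: "f holomorphic_on ball 0 1" and f0: "f 0 = 0"
    and le: "\<And>z. norm z < 1 \<Longrightarrow> norm (f z) \<le> norm z" and z: "norm z < 1"
  shows "norm (hfun f z) \<le> 1"
proof (cases "z = 0")
  case False
  then show ?thesis using le[OF z] by (simp add: hfun_def norm_divide divide_le_eq)
next
  case True
  have cont: "continuous_on (ball 0 1) (hfun f)"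
    using hfun_holo[OF holf f0] holomorphic_on_imp_continuous_on by blast
  then have "isCont (hfun f) 0" using continuous_on_interior[of "ball 0 1" "hfun f" 0]
    by (simp add: interior_open)
  then have lim: "(hfun f \<longlongrightarrow> hfun f 0) (at 0)" using isCont_def by blast
  have ev: "eventually (\<lambda>w. norm (hfun f w) \<le> 1) (at 0)"
  proof -
    have "eventually (\<lambda>w. w \<in> ball 0 1) (at (0::complex))"
      using eventually_at_topological by (metis centre_in_ball open_ball zero_less_one)
    moreover have "eventually (\<lambda>w. w \<noteq> 0) (at (0::complex))" by (simp add: eventually_at_filter)
    ultimately show ?thesis
      by eventually_elim (use le in \<open>auto simp: hfun_def norm_divide divide_le_eq\<close>)
  qed
  have "norm (hfun f 0) \<le> 1"
    using tendsto_upperbound[OF tendsto_norm[OF lim] ev] by simp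
  then show ?thesis using True by simp
qed

lemma disc_auto_bound:
  fixes w \<zeta> :: complex
  assumes "norm w < 1" "norm \<zeta> < 1"
  shows "norm (\<zeta> + w) < norm (1 + cnj w * \<zeta>)"
proof -
  have eq: "(norm (1 + cnj w * \<zeta>))^2 - (norm (\<zeta> + w))^2 = (1 - (norm \<zeta>)^2) * (1 - (norm w)^2)"
    by (simp only: cmod_power2) (simp add: algebra_simps power2_eq_square)
  have "(1 - (norm \<zeta>)^2) * (1 - (norm w)^2) > 0"
    using assms by (intro mult_pos_pos) (auto simp: abs_square_less_1)
  then have "(norm (\<zeta> + w))^2 < (norm (1 + cnj w * \<zeta>))^2" using eq by linarith
  then show ?thesis using power2_less_imp_less by fastforce
qed

lemma zero_bound:
  assumes holh: "h holomorphic_on ball 0 1"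
    and le1: "\<And>z. norm z < 1 \<Longrightarrow> norm (h z) \<le> 1"
    and w: "norm w < 1" and hw: "h w = 0"
  shows "norm (h 0) \<le> norm w"
proof -
  define B where "B \<zeta> = (\<zeta> + w) / (1 + cnj w * \<zeta>)" for \<zeta>
  have den: "1 + cnj w * \<zeta> \<noteq> 0" if "norm \<zeta> < 1" for \<zeta>
    using disc_auto_bound[OF w that] by fastforce
  have Bin: "norm (B \<zeta>) < 1" if "norm \<zeta> < 1" for \<zeta>
    using disc_auto_bound[OF w that] den[OF that] by (simp add: B_def norm_divide divide_less_eq)
  have holB: "B holomorphic_on ball 0 1" unfolding B_def
    by (intro holomorphic_intros) (use den in auto)
  have holf: "(h \<circ> B) holomorphic_on ball 0 1"
    by (rule holomorphic_on_compose_gen[OF holB holh]) (use Bin in auto)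
  have "(h \<circ> B) 0 = 0" by (simp add: B_def hw)
  moreover have "norm ((h \<circ> B) z) \<le> 1" if "norm z < 1" for z
    using le1 Bin that by simp
  ultimately have "norm ((h \<circ> B) (-w)) \<le> norm (-w)"
    by (intro schwarz_weak[OF holf]) (use w in auto)
  moreover have "B (-w) = 0" by (simp add: B_def)
  ultimately show ?thesis by simp
qed

lemma holo_root:
  assumes holH: "H holomorphic_on ball 0 1" and nz: "\<And>z. norm z < 1 \<Longrightarrow> H z \<noteq> 0" and n: "n > 0"
  obtains K where "K holomorphic_on ball 0 1" "\<And>z. norm z < 1 \<Longrightarrow> K z ^ n = H z"
proof -
  obtain g where g: "g holomorphic_on ball 0 1" "\<And>z. z \<in> ball 0 1 \<Longrightarrow> H z = exp (g z)"
    using contractible_imp_holomorphic_log[OF holH convex_imp_contractible[OF convex_ball]] nz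
    by (metis mem_ball_0)
  define K where "K z = exp (g z / of_nat n)" for z
  have "K holomorphic_on ball 0 1" unfolding K_def using g(1) by (intro holomorphic_intros) auto
  moreover have "K z ^ n = H z" if "norm z < 1" for z
  proof -
    have "K z ^ n = exp (of_nat n * (g z / of_nat n))" unfolding K_def by (rule exp_of_nat_mult[symmetric])
    also have "\<dots> = exp (g z)" using n by simp
    finally show ?thesis using g(2) that by simp
  qed
  ultimately show ?thesis using that by blast
qed

lemma PT_D:
  assumes "M \<in> PT"
  shows "prob_space M" "sets M = sets borel" "space M = UNIV" "AE \<zeta> in M. norm \<zeta> = 1"
proof -
  show p: "prob_space M" and s: "sets M = sets borel" using assms by (auto simp: PT_def)
  then show sp: "space M = UNIV" using sets_eq_imp_space_eq by fastforce
  have e: "emeasure M (UNIV - sphere 0 1) = 0" using assms by (auto simp: PT_def)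
  have "UNIV - sphere (0::complex) 1 \<in> sets M" unfolding s by auto
  then have "UNIV - sphere (0::complex) 1 \<in> null_sets M" using e by auto
  then show "AE \<zeta> in M. norm \<zeta> = 1"
    by (rule AE_I') (auto simp: sp)
qed

lemma PT_meas: "M \<in> PT \<Longrightarrow> f \<in> borel_measurable borel \<Longrightarrow> f \<in> borel_measurable M"
  using PT_D(2) measurable_cong_sets by blast

lemma prob_norm_int_bound:
  fixes f :: "complex \<Rightarrow> complex"
  assumes "prob_space M" "f \<in> borel_measurable M" "AE x in M. norm (f x) \<le> c"
  shows "norm (integral\<^sup>L M f) \<le> c" "integrable M f"
proof -
  interpret prob_space M by fact
  show i: "integrable M f" using integrable_const_bound assms by blast
  have "norm (integral\<^sup>L M f) \<le> (\<integral>x. norm (f x) \<partial>M)" by simp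
  also have "\<dots> \<le> c" using assms i by (intro integral_le_const) auto
  finally show "norm (integral\<^sup>L M f) \<le> c" .
qed

lemma re_inv_bound:
  fixes w :: complex assumes "norm w < 1"
  shows "Re (1 / (1 - w)) \<ge> 1 / (1 + norm w)"
proof -
  define a b where "a = Re w" and "b = Im w"
  define r where "r = norm w"
  have r2: "r^2 = a^2 + b^2" unfolding r_def a_def b_def by (simp add: cmod_power2)
  have ar: "a \<ge> -r" unfolding r_def a_def using abs_Re_le_cmod[of w] by linarith
  have r0: "0 \<le> r" "r < 1" using assms by (auto simp: r_def)
  have a1: "a < 1" using ar r0 abs_Re_le_cmod[of w] unfolding a_def r_def by linarith
  have den: "(1 - a)^2 + b^2 > 0" using a1 by (simp add: add_pos_nonneg)
  have "Re (1 / (1 - w)) = (1 - a) / ((1 - a)^2 + b^2)"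
    by (simp add: Re_divide a_def b_def cmod_power2 power2_eq_square)
  moreover have "1 / (1 + r) \<le> (1 - a) / ((1 - a)^2 + b^2)"
  proof -
    have "(1 - a)^2 + b^2 \<le> (1 - a) * (1 + r)"
    proof -
      have "(1 - a) * (1 + r) - ((1 - a)^2 + b^2) = (r + a) * (1 - r)"
        using r2 by (simp add: algebra_simps power2_eq_square)
      moreover have "(r + a) * (1 - r) \<ge> 0" using ar r0 by simp
      ultimately show ?thesis by linarith
    qed
    then show ?thesis using den r0 a1 by (simp add: divide_simps)
  qed
  ultimately show ?thesis by (simp add: r_def)
qed

definition Qf :: "complex measure \<Rightarrow> complex \<Rightarrow> complex" where
  "Qf M z = (\<integral>\<zeta>. 1 / (1 - z * \<zeta>) \<partial>M)"

lemma meas_q1: "(\<lambda>\<zeta>::complex. 1 / (1 - z * \<zeta>)) \<in> borel_measurable borel"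
  by measurable
lemma meas_q2: "(\<lambda>\<zeta>::complex. z * \<zeta> / (1 - z * \<zeta>)) \<in> borel_measurable borel"
  by measurable

lemma psi_Qf:
  assumes M: "M \<in> PT" and z: "norm z < 1"
  shows "psi M z = Qf M z - 1"
proof -
  interpret prob_space M using PT_D[OF M] by blast
  have ne: "1 - z * \<zeta> \<noteq> 0" if "norm \<zeta> = 1" for \<zeta>
  proof
    assume "1 - z * \<zeta> = 0" then have "norm (z * \<zeta>) = 1" by (metis norm_one right_minus_eq)
    with z that show False by (simp add: norm_mult)
  qed
  have int: "integrable M (\<lambda>\<zeta>. 1 / (1 - z * \<zeta>))"
  proof (rule prob_norm_int_bound(2)[where c = "1 / (1 - norm z)"])
    show "prob_space M" by unfold_locales
    show "(\<lambda>\<zeta>. 1 / (1 - z * \<zeta>)) \<in> borel_measurable M" using PT_meas[OF M meas_q1] .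
    show "AE \<zeta> in M. norm (1 / (1 - z * \<zeta>)) \<le> 1 / (1 - norm z)"
      using PT_D(4)[OF M]
    proof eventually_elim
      case (elim \<zeta>)
      have "1 - norm z \<le> norm (1 - z * \<zeta>)"
        using norm_triangle_ineq2[of 1 "z*\<zeta>"] elim by (simp add: norm_mult)
      moreover have "1 - norm z > 0" using z by simp
      ultimately show ?case by (simp add: norm_divide divide_simps)
    qed
  qed
  have "psi M z = (\<integral>\<zeta>. 1 / (1 - z * \<zeta>) - 1 \<partial>M)"
    unfolding psi_def
  proof (rule integral_cong_AE)
    show "(\<lambda>\<zeta>. z * \<zeta> / (1 - z * \<zeta>)) \<in> borel_measurable M" using PT_meas[OF M meas_q2] .
    show "(\<lambda>\<zeta>. 1 / (1 - z * \<zeta>) - 1) \<in> borel_measurable M" using PT_meas[OF M meas_q1] by simp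
    show "AE \<zeta> in M. z * \<zeta> / (1 - z * \<zeta>) = 1 / (1 - z * \<zeta>) - 1"
      using PT_D(4)[OF M] by eventually_elim (use ne in \<open>auto simp: field_simps\<close>)
  qed
  also have "\<dots> = Qf M z - 1" unfolding Qf_def using int by (simp add: prob_space)
  finally show ?thesis .
qed

lemma geo_tail:
  fixes w :: complex assumes "w \<noteq> 1"
  shows "1 / (1 - w) - (\<Sum>k<N. w^k) = w^N / (1 - w)"
  using assms by (simp add: sum_gp_strict field_simps)

lemma Qf_sums:
  assumes M: "M \<in> PT" and z: "norm z < 1"
  shows "(\<lambda>k. (\<integral>\<zeta>. \<zeta>^k \<partial>M) * z^k) sums Qf M z"
proof -
  interpret prob_space M using PT_D[OF M] by blast
  have pM: "prob_space M" by unfold_locales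
  have intk: "integrable M (\<lambda>\<zeta>. z^k * \<zeta>^k)" for k
  proof (rule prob_norm_int_bound(2)[OF pM, where c = "norm z ^ k"])
    show "(\<lambda>\<zeta>. z^k * \<zeta>^k) \<in> borel_measurable M" by (rule PT_meas[OF M]) measurable
    show "AE \<zeta> in M. norm (z^k * \<zeta>^k) \<le> norm z ^ k"
      using PT_D(4)[OF M] by eventually_elim (simp add: norm_mult norm_power)
  qed
  have ne: "1 - z * \<zeta> \<noteq> 0" if "norm \<zeta> = 1" for \<zeta>
  proof
    assume "1 - z * \<zeta> = 0" then have "norm (z * \<zeta>) = 1" by (metis norm_one right_minus_eq)
    with z that show False by (simp add: norm_mult)
  qed
  have intQ: "integrable M (\<lambda>\<zeta>. 1 / (1 - z * \<zeta>))"
  proof (rule prob_norm_int_bound(2)[OF pM, where c = "1 / (1 - norm z)"])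
    show "(\<lambda>\<zeta>. 1 / (1 - z * \<zeta>)) \<in> borel_measurable M" using PT_meas[OF M meas_q1] .
    show "AE \<zeta> in M. norm (1 / (1 - z * \<zeta>)) \<le> 1 / (1 - norm z)"
      using PT_D(4)[OF M]
    proof eventually_elim
      case (elim \<zeta>)
      have "1 - norm z \<le> norm (1 - z * \<zeta>)"
        using norm_triangle_ineq2[of 1 "z*\<zeta>"] elim by (simp add: norm_mult)
      moreover have "1 - norm z > 0" using z by simp
      ultimately show ?case by (simp add: norm_divide divide_simps)
    qed
  qed
  have part: "(\<Sum>k<N. (\<integral>\<zeta>. \<zeta>^k \<partial>M) * z^k) = (\<integral>\<zeta>. (\<Sum>k<N. (z * \<zeta>)^k) \<partial>M)" for N
  proof -
    have "(\<Sum>k<N. (\<integral>\<zeta>. \<zeta>^k \<partial>M) * z^k) = (\<Sum>k<N. (\<integral>\<zeta>. z^k * \<zeta>^k \<partial>M))"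
      by (simp add: mult.commute)
    also have "\<dots> = (\<integral>\<zeta>. (\<Sum>k<N. z^k * \<zeta>^k) \<partial>M)"
      using integral_sum[where I="{..<N}" and f="\<lambda>k \<zeta>. z^k * \<zeta>^k"] intk by simp
    finally show ?thesis by (simp only: power_mult_distrib)
  qed
  have bnd: "norm (Qf M z - (\<Sum>k<N. (\<integral>\<zeta>. \<zeta>^k \<partial>M) * z^k)) \<le> norm z ^ N / (1 - norm z)" for N
  proof -
    have intS: "integrable M (\<lambda>\<zeta>. (\<Sum>k<N. (z * \<zeta>)^k))"
      by (simp only: power_mult_distrib) (intro Bochner_Integration.integrable_sum intk)
    have "Qf M z - (\<Sum>k<N. (\<integral>\<zeta>. \<zeta>^k \<partial>M) * z^k) = (\<integral>\<zeta>. 1 / (1 - z * \<zeta>) - (\<Sum>k<N. (z * \<zeta>)^k) \<partial>M)"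
      unfolding part Qf_def by (rule Bochner_Integration.integral_diff[symmetric, OF intQ intS])
    also have "norm \<dots> \<le> norm z ^ N / (1 - norm z)"
    proof (rule prob_norm_int_bound(1)[OF pM])
      show "(\<lambda>\<zeta>. 1 / (1 - z * \<zeta>) - (\<Sum>k<N. (z * \<zeta>)^k)) \<in> borel_measurable M"
        by (rule PT_meas[OF M]) measurable
      show "AE \<zeta> in M. norm (1 / (1 - z * \<zeta>) - (\<Sum>k<N. (z * \<zeta>)^k)) \<le> norm z ^ N / (1 - norm z)"
        using PT_D(4)[OF M]
      proof eventually_elim
        case (elim \<zeta>)
        have w1: "z * \<zeta> \<noteq> 1" using ne[OF elim] by simp
        have "1 - norm z \<le> norm (1 - z * \<zeta>)"
          using norm_triangle_ineq2[of 1 "z*\<zeta>"] elim by (simp add: norm_mult)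
        moreover have "1 - norm z > 0" using z by simp
        moreover have "norm ((z * \<zeta>)^N) = norm z ^ N" using elim by (simp add: norm_mult norm_power)
        ultimately show ?case unfolding geo_tail[OF w1] norm_divide
          by (metis divide_left_mono norm_ge_zero zero_le_power mult_pos_pos order.strict_trans2)
      qed
    qed
    finally show ?thesis .
  qed
  have lim0: "(\<lambda>N. norm z ^ N / (1 - norm z)) \<longlonglongrightarrow> 0"
    using z by (intro tendsto_divide_zero LIMSEQ_power_zero) auto
  have L: "(\<lambda>N. Qf M z - (\<Sum>k<N. (\<integral>\<zeta>. \<zeta>^k \<partial>M) * z^k)) \<longlonglongrightarrow> 0"
    by (rule Lim_null_comparison[OF _ lim0]) (use bnd in auto)
  have "(\<lambda>N. (\<Sum>k<N. (\<integral>\<zeta>. \<zeta>^k \<partial>M) * z^k)) \<longlonglongrightarrow> Qf M z"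
  proof -
    from tendsto_diff[OF tendsto_const L, of "Qf M z"]
    show ?thesis by simp
  qed
  then show ?thesis unfolding sums_def .
qed

lemma Qf_holo: "M \<in> PT \<Longrightarrow> Qf M holomorphic_on ball 0 1"
  by (rule power_series_holomorphic[where a = "\<lambda>k. (\<integral>\<zeta>. \<zeta>^k \<partial>M)"]) (use Qf_sums in auto)

lemma Qf_re:
  assumes M: "M \<in> PT" and z: "norm z < 1"
  shows "Re (Qf M z) \<ge> 1 / (1 + norm z)"
proof -
  interpret prob_space M using PT_D[OF M] by blast
  have pM: "prob_space M" by unfold_locales
  have int: "integrable M (\<lambda>\<zeta>. 1 / (1 - z * \<zeta>))"
  proof (rule prob_norm_int_bound(2)[OF pM, where c = "1 / (1 - norm z)"])
    show "(\<lambda>\<zeta>. 1 / (1 - z * \<zeta>)) \<in> borel_measurable M" using PT_meas[OF M meas_q1] .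
    show "AE \<zeta> in M. norm (1 / (1 - z * \<zeta>)) \<le> 1 / (1 - norm z)"
      using PT_D(4)[OF M]
    proof eventually_elim
      case (elim \<zeta>)
      have "1 - norm z \<le> norm (1 - z * \<zeta>)"
        using norm_triangle_ineq2[of 1 "z*\<zeta>"] elim by (simp add: norm_mult)
      moreover have "1 - norm z > 0" using z by simp
      ultimately show ?case by (simp add: norm_divide divide_simps)
    qed
  qed
  have "Re (Qf M z) = (\<integral>\<zeta>. Re (1 / (1 - z * \<zeta>)) \<partial>M)"
    unfolding Qf_def by (rule integral_Re[symmetric]) (fact int)
  also have "\<dots> \<ge> 1 / (1 + norm z)"
  proof (rule integral_ge_const)
    show "integrable M (\<lambda>\<zeta>. Re (1 / (1 - z * \<zeta>)))" using int by (rule integrable_Re)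
    show "AE \<zeta> in M. 1 / (1 + norm z) \<le> Re (1 / (1 - z * \<zeta>))"
      using PT_D(4)[OF M]
    proof eventually_elim
      case (elim \<zeta>)
      then have "norm (z * \<zeta>) < 1" using z by (simp add: norm_mult)
      from re_inv_bound[OF this] show ?case using elim by (simp add: norm_mult)
    qed
  qed
  finally show ?thesis .
qed

lemma eta_props:
  assumes M: "M \<in> PT"
  shows "eta M 0 = 0" "eta M holomorphic_on ball 0 1" "\<And>z. norm z < 1 \<Longrightarrow> norm (eta M z) < 1"
    "\<And>z. norm z < 1 \<Longrightarrow> norm (eta M z) \<le> norm z"
proof -
  show e0: "eta M 0 = 0" by (simp add: eta_def psi_def)
  have Re: "Re (psi M z) > - 1/2" if "norm z < 1" for z
  proof -
    have "Re (Qf M z) \<ge> 1 / (1 + norm z)" using Qf_re[OF M that] .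
    moreover have "1 / (1 + norm z) > 1/2"
    proof -
      have "0 < 1 + norm z" by (simp add: add_pos_nonneg)
      then show ?thesis using that by (simp add: field_simps)
    qed
    ultimately show ?thesis using psi_Qf[OF M that] by simp
  qed
  have nz: "1 + psi M z \<noteq> 0" if "norm z < 1" for z
  proof
    assume "1 + psi M z = 0"
    then have "Re (1 + psi M z) = 0" by simp
    then have "Re (psi M z) = -1" by simp
    then show False using Re[OF that] by simp
  qed
  have hpsi: "psi M holomorphic_on ball 0 1"
  proof -
    have "(\<lambda>z. Qf M z - 1) holomorphic_on ball 0 1" using Qf_holo[OF M] by (intro holomorphic_intros)
    then show ?thesis by (rule holomorphic_transform) (auto simp: psi_Qf[OF M])
  qed
  show hol: "eta M holomorphic_on ball 0 1"
  proof -
    have "(\<lambda>z. psi M z / (1 + psi M z)) holomorphic_on ball 0 1"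
      using hpsi nz by (intro holomorphic_intros) auto
    then show ?thesis unfolding eta_def[abs_def] .
  qed
  show lt: "norm (eta M z) < 1" if z: "norm z < 1" for z
  proof -
    let ?p = "psi M z"
    have "(norm ?p)^2 < (norm (1 + ?p))^2"
      using Re[OF z] by (simp only: cmod_power2) (simp add: power2_eq_square algebra_simps)
    then have "norm ?p < norm (1 + ?p)" using power2_less_imp_less by fastforce
    then show ?thesis using nz[OF z] by (simp add: eta_def norm_divide divide_less_eq)
  qed
  show "norm (eta M z) \<le> norm z" if "norm z < 1" for z
    by (rule schwarz_weak[OF hol e0]) (use lt less_imp_le that in auto)
qed

definition cc :: "real \<Rightarrow> complex" where "cc t = circlepath 0 1 t"

lemma cc_exp: "cc t = exp (2 * of_real pi * \<i> * of_real t)"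
  by (simp add: cc_def circlepath)

lemma norm_cc[simp]: "norm (cc t) = 1"
  by (simp add: cc_exp norm_exp_eq_Re)

lemma cc_nz[simp]: "cc t \<noteq> 0"
  using norm_cc[of t] by (metis norm_zero zero_neq_one)

lemma cnj_cc: "cnj (cc t) = 1 / cc t"
proof -
  have "cc t * cnj (cc t) = 1" using complex_norm_square[of "cc t"] by simp
  then show ?thesis by (simp add: field_simps)
qed

lemma cont_cc: "continuous_on UNIV cc"
  unfolding cc_exp by (intro continuous_intros)

lemma cauchy_param:
  assumes G: "G holomorphic_on ball 0 R" and R: "1 < R" and z: "norm z < 1"
  shows "((\<lambda>t. G (cc t) * (cc t / (cc t - z))) has_integral G z) {0..1}"
proof -
  have "G holomorphic_on cball 0 1" by (rule holomorphic_on_subset[OF G]) (use R in auto)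
  from Cauchy_integral_circlepath_simple[OF this, of z] z
  have "((\<lambda>u. G u / (u - z)) has_contour_integral (2 * of_real pi * \<i> * G z)) (circlepath 0 1)"
    by simp
  then have h: "((\<lambda>t. G (cc t) / (cc t - z) * vector_derivative (circlepath 0 1) (at t within {0..1}))
     has_integral (2 * of_real pi * \<i> * G z)) {0..1}"
    unfolding has_contour_integral_def cc_def .
  have "((\<lambda>t. (2 * of_real pi * \<i>) * (G (cc t) * (cc t / (cc t - z)))) has_integral (2 * of_real pi * \<i> * G z)) {0..1}"
    by (rule has_integral_cong[THEN iffD1, OF _ h])
       (auto simp: vector_derivative_circlepath01 cc_exp)
  then show ?thesis
    by (subst (asm) has_integral_mult_right_iff) auto
qed

lemma mean_value_param:
  assumes G: "G holomorphic_on ball 0 R" and R: "1 < R"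
  shows "((\<lambda>t. G (cc t)) has_integral G 0) {0..1}"
  using cauchy_param[OF G R, of 0] by simp

lemma cc_minus_nz: "norm z < 1 \<Longrightarrow> cc t - z \<noteq> 0"
  using norm_cc[of t] by auto

lemma kernel_param:
  assumes G: "G holomorphic_on ball 0 R" and R: "1 < R" and z: "norm z < 1"
  shows "((\<lambda>t. Re (G (cc t)) *\<^sub>R (z / (cc t - z))) has_integral (G z - G 0) / 2) {0..1}"
proof -
  have h1: "((\<lambda>t. G (cc t) * (z / (cc t - z))) has_integral (G z - G 0)) {0..1}"
  proof -
    have "((\<lambda>t. G (cc t) * (cc t / (cc t - z)) - G (cc t)) has_integral (G z - G 0)) {0..1}"
      by (rule has_integral_diff[OF cauchy_param[OF G R z] mean_value_param[OF G R]])
    then show ?thesis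
      by (rule has_integral_cong[THEN iffD1, rotated])
         (use cc_minus_nz[OF z] in \<open>auto simp: field_simps\<close>)
  qed
  have h2: "((\<lambda>t. cnj (G (cc t)) * (z / (cc t - z))) has_integral 0) {0..1}"
  proof -
    define R' where "R' = min R (2 / (1 + norm z))"
    have pz: "0 < 1 + norm z" by (simp add: add_pos_nonneg)
    have R'1: "1 < R'" using R z pz by (auto simp: R'_def field_simps)
    have small: "norm (cnj z * w) < 1" if "w \<in> ball 0 R'" for w
    proof -
      have "norm w < 2 / (1 + norm z)" using that by (auto simp: R'_def)
      then have "norm z * norm w \<le> norm z * (2 / (1 + norm z))"
        by (intro mult_left_mono) auto
      also have "\<dots> < 1" using z pz by (simp add: field_simps)
      finally show ?thesis by (simp add: norm_mult)
    qed
    define H where "H w = G w * (cnj z * w / (1 - cnj z * w))" for w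
    have "H holomorphic_on ball 0 R'"
      unfolding H_def
    proof (intro holomorphic_intros)
      show "G holomorphic_on ball 0 R'" by (rule holomorphic_on_subset[OF G]) (auto simp: R'_def)
      show "1 - cnj z * w \<noteq> 0" if "w \<in> ball 0 R'" for w
        using small[OF that] by auto
    qed
    from mean_value_param[OF this R'1]
    have "((\<lambda>t. H (cc t)) has_integral 0) {0..1}" by (simp add: H_def)
    then have "((cnj \<circ> (\<lambda>t. H (cc t))) has_integral cnj 0) {0..1}"
      by (subst has_integral_cnj)
    then have "((cnj \<circ> (\<lambda>t. H (cc t))) has_integral 0) {0..1}" by simp
    then show ?thesis
    proof (rule has_integral_cong[THEN iffD1, rotated])
      fix t :: real
      have c: "cnj (cc t) = 1 / cc t" by (rule cnj_cc)
      show "(cnj \<circ> (\<lambda>t. H (cc t))) t = cnj (G (cc t)) * (z / (cc t - z))"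
        using cc_minus_nz[OF z, of t] cc_nz[of t]
        by (simp add: H_def c field_simps)
    qed
  qed
  have "((\<lambda>t. (G (cc t) * (z / (cc t - z)) + cnj (G (cc t)) * (z / (cc t - z))) / 2)
      has_integral (G z - G 0) / 2) {0..1}"
    using has_integral_divide[OF has_integral_add[OF h1 h2], of 2] by simp
  then show ?thesis
  proof (rule has_integral_cong[THEN iffD1, rotated])
    fix t :: real
    have "G (cc t) + cnj (G (cc t)) = complex_of_real (2 * Re (G (cc t)))" by (rule complex_add_cnj)
    then show "(G (cc t) * (z / (cc t - z)) + cnj (G (cc t)) * (z / (cc t - z))) / 2 =
      Re (G (cc t)) *\<^sub>R (z / (cc t - z))"
    proof -
      have "(G (cc t) * (z / (cc t - z)) + cnj (G (cc t)) * (z / (cc t - z))) / 2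
          = (G (cc t) + cnj (G (cc t))) * (z / (cc t - z)) / 2" by (simp add: algebra_simps)
      also have "\<dots> = Re (G (cc t)) *\<^sub>R (z / (cc t - z))"
        unfolding complex_add_cnj using cc_minus_nz[OF z, of t] by (simp add: scaleR_conv_of_real field_simps)
      finally show ?thesis .
    qed
  qed
qed

lemma re_param:
  assumes G: "G holomorphic_on ball 0 R" and R: "1 < R"
  shows "((\<lambda>t. Re (G (cc t))) has_integral Re (G 0)) {0..1}"
  using has_integral_Re[OF mean_value_param[OF G R]] .

lemma LH:
  fixes f :: "real \<Rightarrow> 'a::euclidean_space"
  assumes cont: "continuous_on {0..1} f" and hi: "(f has_integral I) {0..1}"
  shows "integrable lborel (\<lambda>t. indicator {0..1} t *\<^sub>R f t)"
    "integral\<^sup>L lborel (\<lambda>t. indicator {0..1} t *\<^sub>R f t) = I"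
proof -
  show i: "integrable lborel (\<lambda>t. indicator {0..1} t *\<^sub>R f t)"
    by (rule borel_integrable_compact[OF compact_Icc cont])
  have "((\<lambda>t. indicator {0..1} t *\<^sub>R f t) has_integral
      integral\<^sup>L lborel (\<lambda>t. indicator {0..1} t *\<^sub>R f t)) UNIV"
    by (rule has_integral_integral_lborel[OF i])
  then have "((\<lambda>t. if t \<in> {0..1} then f t else 0) has_integral
      integral\<^sup>L lborel (\<lambda>t. indicator {0..1} t *\<^sub>R f t)) UNIV"
    by (rule has_integral_cong[THEN iffD1, rotated]) (simp add: indicator_def)
  then have "(f has_integral integral\<^sup>L lborel (\<lambda>t. indicator {0..1} t *\<^sub>R f t)) {0..1}"
    by (subst (asm) has_integral_restrict_UNIV)
  then show "integral\<^sup>L lborel (\<lambda>t. indicator {0..1} t *\<^sub>R f t) = I"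
    using hi has_integral_unique by blast
qed

lemma re_F_pos:
  fixes w :: complex assumes "norm w < 1"
  shows "Re ((1 + w) / (1 - w)) > 0"
proof -
  have w1: "1 - w \<noteq> 0" using assms by auto
  have eq: "(1 + w) / (1 - w) = 2 * (1 / (1 - w)) - 1" using w1 by (simp add: field_simps)
  have "Re (1 / (1 - w)) \<ge> 1 / (1 + norm w)" by (rule re_inv_bound[OF assms])
  moreover have "1 / (1 + norm w) > 1/2"
  proof -
    have "0 < 1 + norm w" by (simp add: add_pos_nonneg)
    then show ?thesis using assms by (simp add: field_simps)
  qed
  moreover have r: "\<And>u::complex. Re (2 * u - 1) = 2 * Re u - 1" by simp
  ultimately show ?thesis unfolding eq r by linarith
qed

lemma herglotz:
  assumes hol: "\<phi> holomorphic_on ball 0 1" and \<phi>0: "\<phi> 0 = 0"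
    and lt: "\<And>z. norm z < 1 \<Longrightarrow> norm (\<phi> z) < 1"
  shows "\<exists>\<rho>\<in>PT. \<forall>z\<in>ball 0 1. eta \<rho> z = \<phi> z"
proof -
  define F where "F z = (1 + \<phi> z) / (1 - \<phi> z)" for z
  have n1: "1 - \<phi> z \<noteq> 0" if "norm z < 1" for z
    using lt[OF that] by auto
  have Fhol: "F holomorphic_on ball 0 1" unfolding F_def
    using hol n1 by (intro holomorphic_intros) auto
  have F0: "F 0 = 1" by (simp add: F_def \<phi>0)
  have ReF: "Re (F z) \<ge> 0" if "norm z < 1" for z
    using re_F_pos[OF lt[OF that]] by (simp add: F_def)
  define rr where "rr n = 1 - 1 / (real n + 2)" for n
  have rr: "0 < rr n" "rr n < 1" for n by (auto simp: rr_def field_simps)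
  have rrlim: "rr \<longlonglongrightarrow> 1"
  proof -
    have "(\<lambda>n. inverse (real (Suc (Suc n)))) \<longlonglongrightarrow> 0"
      using LIMSEQ_Suc[OF LIMSEQ_inverse_real_of_nat] by simp
    then have "(\<lambda>n. 1 / (real n + 2)) \<longlonglongrightarrow> 0"
      by (simp add: divide_inverse add.commute)
    from tendsto_diff[OF tendsto_const this, of 1] show ?thesis by (simp add: rr_def[abs_def])
  qed
  define G where "G n z = F (of_real (rr n) * z)" for n z
  have Rn: "1 < 1 / rr n" for n using rr[of n] by (simp add: field_simps)
  have inball: "norm (of_real (rr n) * z) < 1" if "z \<in> ball 0 (1 / rr n)" for n and z :: complex
    using that rr[of n] by (simp add: norm_mult field_simps)
  have Ghol: "G n holomorphic_on ball 0 (1 / rr n)" for n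
  proof -
    have "(F \<circ> (\<lambda>z. of_real (rr n) * z)) holomorphic_on ball 0 (1 / rr n)"
      by (rule holomorphic_on_compose_gen[OF _ Fhol]) (auto intro!: holomorphic_intros inball)
    then show ?thesis by (simp add: G_def[abs_def] comp_def)
  qed
  have G0: "G n 0 = 1" for n by (simp add: G_def F0)
  have contGc: "continuous_on UNIV (\<lambda>t. G n (cc t))" for n
  proof (rule continuous_on_compose2[OF holomorphic_on_imp_continuous_on[OF Ghol[of n]] cont_cc])
    show "cc ` UNIV \<subseteq> ball 0 (1 / rr n)" using Rn[of n] by auto
  qed
  define d where "d n t = indicator {0..1} t * Re (G n (cc t))" for n t
  have dnn: "d n t \<ge> 0" for n t
  proof -
    have "norm (of_real (rr n) * cc t) < 1" using rr[of n] by (simp add: norm_mult)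
    then show ?thesis using ReF by (simp add: d_def G_def indicator_def)
  qed
  have dmeas: "d n \<in> borel_measurable borel" for n
  proof -
    have m1: "(\<lambda>t. Re (G n (cc t))) \<in> borel_measurable borel"
      by (rule borel_measurable_continuous_onI, rule continuous_on_Re, rule contGc)
    have m2: "indicator {0..1::real} \<in> borel_measurable borel"
      by (rule borel_measurable_indicator) simp
    show ?thesis unfolding d_def[abs_def] by (rule borel_measurable_times[OF m2 m1])
  qed
  define \<nu> where "\<nu> n = density lborel (\<lambda>t. ennreal (d n t))" for n
  have int_d: "integrable lborel (d n)" "integral\<^sup>L lborel (d n) = 1" for n
  proof -
    have c: "continuous_on {0..1} (\<lambda>t. Re (G n (cc t)))"
      by (rule continuous_on_Re, rule continuous_on_subset[OF contGc[of n]]) auto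
    have eq: "d n = (\<lambda>t. indicator {0..1} t *\<^sub>R Re (G n (cc t)))"
      by (auto simp: d_def[abs_def])
    show "integrable lborel (d n)" unfolding eq by (rule LH(1)[OF c re_param[OF Ghol Rn]])
    show "integral\<^sup>L lborel (d n) = 1" unfolding eq LH(2)[OF c re_param[OF Ghol Rn]] by (simp add: G0)
  qed
  have nnint: "(\<integral>\<^sup>+t. ennreal (d n t) \<partial>lborel) = 1" for n
    using nn_integral_eq_integral[OF int_d(1)] int_d(2) dnn by simp
  have emUNIV: "emeasure (\<nu> n) A = 1" if "{0..1} \<subseteq> A" "A \<in> sets borel" for n A
  proof -
    have "emeasure (\<nu> n) A = (\<integral>\<^sup>+t. ennreal (d n t) * indicator A t \<partial>lborel)"
      unfolding \<nu>_def by (rule emeasure_density) (use dmeas that in auto)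
    also have "\<dots> = (\<integral>\<^sup>+t. ennreal (d n t) \<partial>lborel)"
      by (rule nn_integral_cong) (use that in \<open>auto simp: d_def indicator_def\<close>)
    finally show ?thesis using nnint by simp
  qed
  have RD: "real_distribution (\<nu> n)" for n
  proof -
    have "prob_space (\<nu> n)" by (rule prob_spaceI) (use emUNIV[of UNIV n] in \<open>simp add: \<nu>_def\<close>)
    then show ?thesis unfolding real_distribution_def real_distribution_axioms_def by (simp add: \<nu>_def)
  qed
  have tight: "tight \<nu>"
    unfolding tight_def
  proof (intro conjI allI impI)
    show "real_distribution (\<nu> n)" for n by (rule RD)
    fix e :: real assume "0 < e"
    have sub: "{0..1::real} \<subseteq> {-1<..2}" by auto
    have "measure (\<nu> n) {-1<..2} = 1" for n
      using emUNIV[OF sub, of n] by (simp add: measure_def)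
    then show "\<exists>a b. a < b \<and> (\<forall>n. 1 - e < measure (\<nu> n) {a<..b})"
      using \<open>0 < e\<close> by (intro exI[of _ "-1"] exI[of _ 2]) auto
  qed
  obtain r M where r: "strict_mono r" and RM: "real_distribution M" and wc: "weak_conv_m (\<nu> \<circ> id \<circ> r) M"
    using tight_imp_convergent_subsubsequence[OF tight, of id] by (auto simp: strict_mono_def)
  define \<rho> where "\<rho> = distr M borel (\<lambda>t. cnj (cc t))"
  have pM: "prob_space M" using RM by (simp add: real_distribution_def)
  have sM: "sets M = sets borel" using RM by (simp add: real_distribution_def real_distribution_axioms_def)
  have contcnj: "continuous_on UNIV (\<lambda>t. cnj (cc t))"
    by (rule continuous_on_cnj[OF cont_cc])
  have meas_c: "(\<lambda>t. cnj (cc t)) \<in> measurable M borel"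
  proof -
    have "(\<lambda>t. cnj (cc t)) \<in> borel_measurable borel"
      by (rule borel_measurable_continuous_onI[OF contcnj])
    then show ?thesis using sM measurable_cong_sets by blast
  qed
  have PTr: "\<rho> \<in> PT"
    unfolding PT_def
  proof (intro CollectI conjI)
    show "prob_space \<rho>" unfolding \<rho>_def by (rule prob_space.prob_space_distr[OF pM meas_c])
    show "sets \<rho> = sets borel" by (simp add: \<rho>_def)
    have "emeasure \<rho> (UNIV - sphere 0 1) = emeasure M ((\<lambda>t. cnj (cc t)) -` (UNIV - sphere 0 1) \<inter> space M)"
      unfolding \<rho>_def by (rule emeasure_distr[OF meas_c]) auto
    also have "(\<lambda>t. cnj (cc t)) -` (UNIV - sphere 0 1) \<inter> space M = {}" by auto
    finally show "emeasure \<rho> (UNIV - sphere 0 1) = 0" by simp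
  qed
  have "eta \<rho> z = \<phi> z" if z: "norm z < 1" for z
  proof -
    define k where "k t = z * cnj (cc t) / (1 - z * cnj (cc t))" for t
    have k_eq: "k t = z / (cc t - z)" for t
      using cc_minus_nz[OF z, of t] cc_nz[of t] by (simp add: k_def cnj_cc field_simps)
    have kc: "continuous_on UNIV (\<lambda>t. z / (cc t - z))"
      by (rule continuous_on_divide[OF continuous_on_const continuous_on_diff[OF cont_cc continuous_on_const]])
         (use cc_minus_nz[OF z] in auto)
    have kcont: "isCont k t" for t
      using kc unfolding k_eq[abs_def] by (simp add: continuous_on_eq_continuous_at)
    have kbound: "norm (k t) \<le> norm z / (1 - norm z)" for t
    proof -
      have "1 - norm z \<le> norm (cc t - z)" using norm_triangle_ineq2[of "cc t" z] by simp
      moreover have "0 < 1 - norm z" using z by simp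
      ultimately show ?thesis unfolding k_eq norm_divide
        by (intro divide_left_mono mult_pos_pos) auto
    qed
    have psi_eq: "psi \<rho> z = integral\<^sup>L M k"
      unfolding psi_def \<rho>_def k_def
      by (rule integral_distr[OF meas_c meas_q2])
    have conv: "(\<lambda>n. integral\<^sup>L ((\<nu> \<circ> id \<circ> r) n) k) \<longlonglongrightarrow> integral\<^sup>L M k"
      by (rule weak_conv_imp_integral_bdd_continuous_conv) (use RD RM wc kcont kbound in \<open>auto simp: comp_def\<close>)
    have vals: "integral\<^sup>L (\<nu> m) k = (F (of_real (rr m) * z) - 1) / 2" for m
    proof -
      have "integral\<^sup>L (\<nu> m) k = integral\<^sup>L lborel (\<lambda>t. d m t *\<^sub>R k t)"
        unfolding \<nu>_def
        by (rule integral_density) (use dmeas dnn kc in \<open>auto simp: k_eq[abs_def] intro: borel_measurable_continuous_onI\<close>)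
      also have "\<dots> = integral\<^sup>L lborel (\<lambda>t. indicator {0..1} t *\<^sub>R (Re (G m (cc t)) *\<^sub>R (z / (cc t - z))))"
        by (simp add: d_def k_eq)
      also have "\<dots> = (G m z - G m 0) / 2"
      proof (rule LH(2)[OF _ kernel_param[OF Ghol Rn z]])
        show "continuous_on {0..1} (\<lambda>t. Re (G m (cc t)) *\<^sub>R (z / (cc t - z)))"
          by (rule continuous_on_scaleR[OF continuous_on_Re[OF continuous_on_subset[OF contGc]]
              continuous_on_subset[OF kc]]) auto
      qed
      finally show ?thesis using F0 by (simp add: G_def)
    qed
    have Fc: "isCont F z"
      using holomorphic_on_imp_continuous_on[OF Fhol] z
      by (simp add: continuous_on_eq_continuous_at)
    have "(\<lambda>n. complex_of_real (rr (r n)) * z) \<longlonglongrightarrow> complex_of_real 1 * z"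
      using LIMSEQ_subseq_LIMSEQ[OF rrlim r]
      by (intro tendsto_mult tendsto_of_real tendsto_const) (simp add: comp_def)
    then have "(\<lambda>n. F (complex_of_real (rr (r n)) * z)) \<longlonglongrightarrow> F z"
      using isCont_tendsto_compose[OF Fc] by simp
    then have "(\<lambda>n. (F (complex_of_real (rr (r n)) * z) - 1) / 2) \<longlonglongrightarrow> (F z - 1) / 2"
      by (intro tendsto_intros) simp_all
    moreover have "(\<lambda>n. integral\<^sup>L ((\<nu> \<circ> id \<circ> r) n) k) = (\<lambda>n. (F (complex_of_real (rr (r n)) * z) - 1) / 2)"
      by (simp add: vals)
    ultimately have "psi \<rho> z = (F z - 1) / 2"
      using conv psi_eq LIMSEQ_unique by metis
    moreover have "(F z - 1) / 2 = \<phi> z / (1 - \<phi> z)"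
      using n1[OF z] by (simp add: F_def divide_simps)
    ultimately have pe: "psi \<rho> z = \<phi> z / (1 - \<phi> z)" by simp
    have "1 + \<phi> z / (1 - \<phi> z) = 1 / (1 - \<phi> z)"
      using n1[OF z] by (simp add: field_simps)
    then show ?thesis
      using n1[OF z] unfolding eta_def pe by simp
  qed
  then have "\<forall>z\<in>ball 0 1. eta \<rho> z = \<phi> z" by simp
  with PTr show ?thesis by blast
qed

lemma iter_props:
  assumes hol: "g holomorphic_on ball 0 1" and g0: "g 0 = 0"
    and le: "\<And>z. norm z < 1 \<Longrightarrow> norm (g z) \<le> norm z"
  shows "(g^^k) 0 = 0" "\<And>z. norm z < 1 \<Longrightarrow> norm ((g^^k) z) \<le> norm z" "isCont (g^^k) 0"
proof -
  have z0: "(g^^j) 0 = 0" for j by (induction j) (auto simp: g0)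
  then show "(g^^k) 0 = 0" .
  show "norm ((g^^k) z) \<le> norm z" if "norm z < 1" for z
  proof (induction k)
    case (Suc k)
    then have "norm ((g^^k) z) < 1" using that by linarith
    then have "norm (g ((g^^k) z)) \<le> norm ((g^^k) z)" by (rule le)
    then show ?case using Suc by simp
  qed simp
  have cg: "isCont g 0"
    using holomorphic_on_imp_continuous_on[OF hol]
    by (simp add: continuous_on_eq_continuous_at)
  show "isCont (g^^k) 0"
  proof (induction k)
    case 0 then show ?case by simp
  next
    case (Suc k)
    have "isCont g ((g^^k) 0)" using cg z0[of k] by simp
    then have "isCont (g \<circ> (g^^k)) 0" by (rule continuous_at_compose[OF Suc.IH])
    then show ?case by (simp add: comp_def)
  qed
qed

lemma iter_eta:
  assumes N: "N \<in> PT"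
  shows "(eta N^^k) 0 = 0" "\<And>z. norm z < 1 \<Longrightarrow> norm ((eta N^^k) z) \<le> norm z" "isCont (eta N^^k) 0"
proof -
  note e = eta_props[OF N]
  show "(eta N^^k) 0 = 0" by (rule iter_props(1)) (use e in auto)
  show "norm ((eta N^^k) z) \<le> norm z" if "norm z < 1" for z
    by (rule iter_props(2)) (use e that in auto)
  show "isCont (eta N^^k) 0" by (rule iter_props(3)) (use e in auto)
qed

lemma hfun_props:
  assumes "M \<in> PT"
  shows "hfun (eta M) holomorphic_on ball 0 1" "\<And>z. norm z < 1 \<Longrightarrow> norm (hfun (eta M) z) \<le> 1"
    "\<And>z. eta M z = z * hfun (eta M) z" "isCont (hfun (eta M)) 0"
proof -
  note e = eta_props[OF assms]
  show h: "hfun (eta M) holomorphic_on ball 0 1" by (rule hfun_holo[OF e(2,1)])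
  show "norm (hfun (eta M) z) \<le> 1" if "norm z < 1" for z by (rule hfun_le1[OF e(2,1) e(4) that])
  show "eta M z = z * hfun (eta M) z" for z by (rule hfun_eq[where f="eta M", OF e(1)])
  show "isCont (hfun (eta M)) 0"
    using holomorphic_on_imp_continuous_on[OF h] by (simp add: continuous_on_eq_continuous_at)
qed

lemma H_factor:
  assumes M: "M \<in> PT" and M1: "M1 \<in> PT" and N1: "N1 \<in> PT"
    and eq: "\<forall>z\<in>ball 0 1. eta M z = fst (cm_pow (eta M1) (eta N1) n) z"
  shows "\<And>z. norm z < 1 \<Longrightarrow> hfun (eta M) z = (\<Prod>k<n. hfun (eta M1) ((eta N1 ^^ k) z))"
proof -
  define P where "P z = (\<Prod>k<n. hfun (eta M1) ((eta N1 ^^ k) z))" for z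
  note g = eta_props[OF N1]
  note it = iter_eta[OF N1]
  have nz: "hfun (eta M) z = P z" if "norm z < 1" "z \<noteq> 0" for z
  proof -
    have "eta M z = z * P z" using eq that by (simp add: cm_pow_formula P_def)
    then show ?thesis using hfun_props(3)[OF M, of z] that by simp
  qed
  have cP: "isCont P 0"
    unfolding P_def
  proof (intro continuous_intros)
    fix k
    show "isCont (\<lambda>z. hfun (eta M1) ((eta N1 ^^ k) z)) 0"
      using continuous_at_compose[OF it(3)[of k], of "hfun (eta M1)"] hfun_props(4)[OF M1] it(1)[of k]
      by (simp add: comp_def)
  qed
  have cH: "isCont (hfun (eta M)) 0" by (rule hfun_props(4)[OF M])
  have ev: "eventually (\<lambda>z. hfun (eta M) z = P z) (at (0::complex))"
  proof -
    have "eventually (\<lambda>w. w \<in> ball 0 1) (at (0::complex))"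
      using eventually_at_topological by (metis centre_in_ball open_ball zero_less_one)
    moreover have "eventually (\<lambda>w. w \<noteq> 0) (at (0::complex))" by (simp add: eventually_at_filter)
    ultimately show ?thesis by eventually_elim (use nz in auto)
  qed
  have "(hfun (eta M) \<longlongrightarrow> hfun (eta M) 0) (at 0)" using cH isCont_def by blast
  then have "(P \<longlongrightarrow> hfun (eta M) 0) (at 0)" using ev by (rule Lim_transform_eventually)
  moreover have "(P \<longlongrightarrow> P 0) (at 0)" using cP isCont_def by blast
  ultimately have "hfun (eta M) 0 = P 0" using tendsto_unique by (metis at_neq_bot)
  then show "hfun (eta M) z = P z" if "norm z < 1" for z
    using nz[OF that] by (cases "z = 0") auto
qed

lemma diag_prod:
  assumes f0: "f 0 = 0"
  shows "z * (\<Prod>k<n. hfun f ((f^^k) z)) = (f^^n) z"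
proof (induction n)
  case (Suc n)
  have "z * (\<Prod>k<Suc n. hfun f ((f^^k) z)) = (z * (\<Prod>k<n. hfun f ((f^^k) z))) * hfun f ((f^^n) z)"
    by (simp add: mult.assoc)
  also have "\<dots> = (f^^n) z * hfun f ((f^^n) z)" using Suc by simp
  also have "\<dots> = f ((f^^n) z)" using hfun_eq[where f=f, OF f0, of "(f^^n) z"] by simp
  finally show ?case by simp
qed simp

lemma cm_pow_diag: "f 0 = 0 \<Longrightarrow> cm_pow f f n = (f^^n, f^^n)"
  by (simp add: cm_pow_formula diag_prod)

lemma core:
  assumes M: "M \<in> PT" and idc: "ID_cm M N"
  shows "M \<in> ID_boolean"
proof -
  let ?H = "hfun (eta M)"
  note hp = hfun_props[OF M]
  have fac: "\<exists>M1\<in>PT. \<exists>N1\<in>PT. \<forall>z. norm z < 1 \<longrightarrow> ?H z = (\<Prod>k<n. hfun (eta M1) ((eta N1 ^^ k) z))"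
    if n2: "n \<ge> 2" for n
  proof -
    obtain M1 N1 where MN: "M1 \<in> PT" "N1 \<in> PT"
      and eq0: "\<forall>z\<in>ball 0 1. eta M z = fst (cm_pow (eta M1) (eta N1) n) z \<and> eta N z = snd (cm_pow (eta M1) (eta N1) n) z"
      using idc[unfolded ID_cm_def, rule_format, OF n2] by blast
    have eq: "\<forall>z\<in>ball 0 1. eta M z = fst (cm_pow (eta M1) (eta N1) n) z" using eq0 by blast
    show ?thesis using H_factor[OF M MN eq] MN by blast
  qed
  have at0: "?H 0 = hfun (eta M1) 0 ^ n"
    if "N1 \<in> PT" "\<forall>z. norm z < 1 \<longrightarrow> ?H z = (\<Prod>k<n. hfun (eta M1) ((eta N1 ^^ k) z))" for M1 N1 n
  proof -
    note it = iter_eta[OF that(1)]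
    show ?thesis using that(2) it(1) by simp
  qed
  have zero_case: "?H z = 0" if H0: "?H 0 = 0" and z: "norm z < 1" for z
  proof -
    have bnd: "norm (?H z) \<le> norm z ^ n" if n: "n \<ge> 2" for n
    proof -
      obtain M1 N1 where M1: "M1 \<in> PT" and N1: "N1 \<in> PT"
        and fz: "\<forall>z. norm z < 1 \<longrightarrow> ?H z = (\<Prod>k<n. hfun (eta M1) ((eta N1 ^^ k) z))"
        using fac[OF n] by blast
      note g = eta_props[OF N1]
      note it = iter_eta[OF N1]
      have "hfun (eta M1) 0 ^ n = 0" using at0[OF N1 fz] H0 by simp
      then have h0: "hfun (eta M1) 0 = 0" by simp
      have sch: "norm (hfun (eta M1) w) \<le> norm w" if "norm w < 1" for w
        by (rule schwarz_weak[OF hfun_props(1)[OF M1] h0 hfun_props(2)[OF M1] that])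
      have "norm (?H z) = (\<Prod>k<n. norm (hfun (eta M1) ((eta N1 ^^ k) z)))"
        using fz z by (simp add: prod_norm)
      also have "\<dots> \<le> (\<Prod>k<n. norm z)"
      proof (rule prod_mono)
        fix k assume "k \<in> {..<n}"
        have "norm ((eta N1 ^^ k) z) \<le> norm z" by (rule it(2)[OF z])
        then show "0 \<le> norm (hfun (eta M1) ((eta N1 ^^ k) z)) \<and> norm (hfun (eta M1) ((eta N1 ^^ k) z)) \<le> norm z"
          using sch[of "(eta N1 ^^ k) z"] z by auto
      qed
      finally show ?thesis by simp
    qed
    have lim: "(\<lambda>n. norm z ^ n) \<longlonglongrightarrow> 0" using z by (intro LIMSEQ_power_zero) simp
    have "eventually (\<lambda>n. norm (?H z) \<le> norm z ^ n) sequentially"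
      using bnd by (auto simp: eventually_sequentially intro!: exI[of _ 2])
    then have "norm (?H z) \<le> 0" by (rule tendsto_lowerbound[OF lim]) simp
    then show ?thesis by simp
  qed
  have nz_case: "?H z \<noteq> 0" if H0: "?H 0 \<noteq> 0" and z: "norm z < 1" for z
  proof
    assume Hz: "?H z = 0"
    have lim: "(\<lambda>n. norm z ^ n) \<longlonglongrightarrow> 0" using z by (intro LIMSEQ_power_zero) simp
    have "eventually (\<lambda>n. norm z ^ n < norm (?H 0)) sequentially"
      using order_tendstoD(2)[OF lim] H0 by simp
    then obtain N where N: "\<And>n. n \<ge> N \<Longrightarrow> norm z ^ n < norm (?H 0)"
      by (auto simp: eventually_sequentially)
    define n where "n = max N 2"
    have n: "n \<ge> 2" "norm z ^ n < norm (?H 0)" using N[of n] by (auto simp: n_def)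
    obtain M1 N1 where M1: "M1 \<in> PT" and N1: "N1 \<in> PT"
      and fz: "\<forall>z. norm z < 1 \<longrightarrow> ?H z = (\<Prod>k<n. hfun (eta M1) ((eta N1 ^^ k) z))"
      using fac[OF n(1)] by blast
    note g = eta_props[OF N1]
    note it = iter_eta[OF N1]
    have "norm (hfun (eta M1) 0) ^ n > norm z ^ n"
      using at0[OF N1 fz] n(2) by (simp add: norm_power)
    then have lt: "norm z < norm (hfun (eta M1) 0)"
      by (rule power_less_imp_less_base) simp
    have "(\<Prod>k<n. hfun (eta M1) ((eta N1 ^^ k) z)) = 0" using fz z Hz by simp
    then obtain k where "hfun (eta M1) ((eta N1 ^^ k) z) = 0" by auto
    moreover have w: "norm ((eta N1 ^^ k) z) \<le> norm z" by (rule it(2)[OF z])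
    ultimately have "norm (hfun (eta M1) 0) \<le> norm ((eta N1 ^^ k) z)"
      using z by (intro zero_bound[OF hfun_props(1)[OF M1] hfun_props(2)[OF M1]]) auto
    with lt w show False by simp
  qed
  show "M \<in> ID_boolean"
    unfolding ID_boolean_def
  proof (intro CollectI conjI allI impI)
    show "M \<in> PT" by fact
    fix n :: nat assume n: "2 \<le> n"
    then obtain m where m: "n = Suc m" by (cases n) auto
    show "\<exists>\<rho>\<in>PT. \<forall>z\<in>ball 0 1. eta M z = eta \<rho> z ^ n / z ^ (n - 1)"
    proof (cases "?H 0 = 0")
      case True
      have "eta M z = eta M z ^ n / z ^ (n - 1)" if "z \<in> ball 0 1" for z
      proof -
        have "eta M z = 0" using hp(3)[of z] zero_case[OF True, of z] that by simp
        then show ?thesis using n by simp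
      qed
      then show ?thesis using M by blast
    next
      case False
      have nz: "\<And>z. norm z < 1 \<Longrightarrow> ?H z \<noteq> 0" using nz_case[OF False] by blast
      obtain K where K: "K holomorphic_on ball 0 1" "\<And>z. norm z < 1 \<Longrightarrow> K z ^ n = ?H z"
        using holo_root[OF hp(1) nz, of n] n by auto
      define \<phi> where "\<phi> z = z * K z" for z
      have Kle: "norm (K z) \<le> 1" if "norm z < 1" for z
      proof -
        have "norm (K z) ^ n \<le> 1" using K(2)[OF that] hp(2)[OF that] by (metis norm_power)
        then show ?thesis using n by (simp add: power_le_one_iff)
      qed
      have phol: "\<phi> holomorphic_on ball 0 1" unfolding \<phi>_def[abs_def] using K(1) by (intro holomorphic_intros)
      have plt: "norm (\<phi> z) < 1" if "norm z < 1" for z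
      proof -
        have "norm (\<phi> z) \<le> norm z" using Kle[OF that] by (simp add: \<phi>_def norm_mult mult_left_le)
        then show ?thesis using that by simp
      qed
      obtain \<rho> where \<rho>: "\<rho> \<in> PT" "\<forall>z\<in>ball 0 1. eta \<rho> z = \<phi> z"
        using herglotz[OF phol _ plt] by (auto simp: \<phi>_def)
      have "eta M z = eta \<rho> z ^ n / z ^ (n - 1)" if "z \<in> ball 0 1" for z
      proof (cases "z = 0")
        case True then show ?thesis using n eta_props(1)[OF M] by simp
      next
        case False
        have zz: "norm z < 1" using that by simp
        have "eta \<rho> z ^ n / z ^ (n - 1) = z ^ n * K z ^ n / z ^ m"
          using \<rho>(2) that by (simp add: \<phi>_def power_mult_distrib m)
        also have "\<dots> = z * ?H z" using False K(2)[OF zz] by (simp add: m)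
        also have "\<dots> = eta M z" using hp(3)[of z] by simp
        finally show ?thesis by simp
      qed
      then show ?thesis using \<rho>(1) by blast
    qed
  qed
qed

lemma ID_cm_snd:
  assumes "ID_cm M N"
  shows "ID_cm N N"
  unfolding ID_cm_def
proof (intro allI impI)
  fix n :: nat assume n: "2 \<le> n"
  obtain M1 N1 where MN: "M1 \<in> PT" "N1 \<in> PT"
    and eq0: "\<forall>z\<in>ball 0 1. eta M z = fst (cm_pow (eta M1) (eta N1) n) z \<and> eta N z = snd (cm_pow (eta M1) (eta N1) n) z"
    using assms[unfolded ID_cm_def, rule_format, OF n] by blast
  have eq: "\<forall>z\<in>ball 0 1. eta N z = snd (cm_pow (eta M1) (eta N1) n) z" using eq0 by blast
  have "\<forall>z\<in>ball 0 1. eta N z = fst (cm_pow (eta N1) (eta N1) n) z \<and> eta N z = snd (cm_pow (eta N1) (eta N1) n) z"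
  proof -
    have s1: "snd (cm_pow (eta M1) (eta N1) n) = eta N1 ^^ n" by (simp add: cm_pow_formula)
    show ?thesis using eq unfolding s1 cm_pow_diag[where f="eta N1", OF eta_props(1)[OF MN(2)]] by simp
  qed
  then show "\<exists>\<mu>1\<in>PT. \<exists>\<nu>1\<in>PT. \<forall>z\<in>ball 0 1. eta N z = fst (cm_pow (eta \<mu>1) (eta \<nu>1) n) z \<and>
      eta N z = snd (cm_pow (eta \<mu>1) (eta \<nu>1) n) z" using MN by blast
qed

lemma mono_cm:
  assumes "M \<in> ID_monotone"
  shows "ID_cm M M"
  unfolding ID_cm_def
proof (intro allI impI)
  fix n :: nat assume n: "2 \<le> n"
  obtain R where R: "R \<in> PT" and eq: "\<forall>z\<in>ball 0 1. eta M z = (eta R ^^ n) z"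
    using assms n unfolding ID_monotone_def by auto
  have "\<forall>z\<in>ball 0 1. eta M z = fst (cm_pow (eta R) (eta R) n) z \<and> eta M z = snd (cm_pow (eta R) (eta R) n) z"
    using eq by (simp add: cm_pow_diag[where f="eta R", OF eta_props(1)[OF R]])
  then show "\<exists>\<mu>1\<in>PT. \<exists>\<nu>1\<in>PT. \<forall>z\<in>ball 0 1. eta M z = fst (cm_pow (eta \<mu>1) (eta \<nu>1) n) z \<and>
      eta M z = snd (cm_pow (eta \<mu>1) (eta \<nu>1) n) z" using R by blast
qed

theorem theorem5p12:
  shows "(\<forall>\<mu> \<in> PT. \<forall>\<nu> \<in> PT. ID_cm \<mu> \<nu> \<longrightarrow> \<mu> \<in> ID_boolean \<and> \<nu> \<in> ID_boolean)
         \<and> ID_monotone \<subseteq> ID_boolean"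
proof
  show "\<forall>\<mu> \<in> PT. \<forall>\<nu> \<in> PT. ID_cm \<mu> \<nu> \<longrightarrow> \<mu> \<in> ID_boolean \<and> \<nu> \<in> ID_boolean"
    using core ID_cm_snd by blast
  show "ID_monotone \<subseteq> ID_boolean"
  proof
    fix M assume M: "M \<in> ID_monotone"
    then have "M \<in> PT" by (simp add: ID_monotone_def)
    then show "M \<in> ID_boolean" using core mono_cm[OF M] by blast
  qed
qed

end
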